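(* Let $G=(\mathfrak{N},\mathfrak{T},\mathfrak{R},\mathfrak{S})$ be a context-free grammar, $\Sigma$ a set of characters, $(\textsl{Lex},\textsl{Sel})$ a local lexing with respect to $\mathfrak{T}$ and $\Sigma$, and $D\in\Sigma^*$. Then Earley's algorithm with local lexing is sound and complete: \[ D\in\mathcal{L}_\Sigma \quad\Longleftrightarrow\quad \exists\,\alpha.\ (\mathfrak{S}\rightarrow\alpha\,\bullet,\,0,\,|D|)\in\mathfrak{I}, \] where $\mathcal{L}_\Sigma=\{D\in\Sigma^*\mid \ell\ell(D)\neq\emptyset\}$ and $\ell\ell(D)$ and $\mathfrak{I}$ are as defined in the context.
   Context: Notation: for a set $U$, $U^*$ is the set of finite sequences over $U$, $\varepsilon$ the empty sequence, juxtaposition is concatenation, $|\alpha|$ the length and $\alpha_i$ ($0\le i<|\alpha|$) the $i$-th element. A context-free grammar $(\mathfrak{N},\mathfrak{T},\mathfrak{R},\mathfrak{S})$ has disjoint nonterminals $\mathfrak{N}$ and terminals $\mathfrak{T}$, rules $\mathfrak{R}\subseteq\mathfrak{N}\times(\mathfrak{N}\cup\mathfrak{T})^*$ (written $N\rightarrow\alpha$), start symbol $\mathfrak{S}$; $\alpha\Rightarrow\beta$ iff $\alpha=\alpha_0N\alpha_1$, $\beta=\alpha_0\gamma\alpha_1$ with $N\rightarrow\gamma$; $\overset{*}{\Rightarrow}$ is its reflexive-transitive closure. $\mathcal{L}=\{w\in\mathfrak{T}^*\mid\mathfrak{S}\overset{*}{\Rightarrow}w\}$ and $\mathcal{L}_{\text{prefix}}=\{w\in\mathfrak{T}^*\mid\exists\alpha\in(\mathfrak{N}\cup\mathfrak{T})^*.\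 \mathfrak{S}\overset{*}{\Rightarrow}w\alpha\}$. Tokens: a token is a pair $x=(t,c)\in\mathfrak{T}\times\Sigma^*$; $[x]=t$, $\overline{x}=c$; it is empty iff $|c|=0$. For a token sequence (path) $q=x_0\ldots x_r$, $[q]=[x_0]\ldots[x_r]\in\mathfrak{T}^*$ and $\overline{q}=\overline{x_0}\ldots\overline{x_r}\in\Sigma^*$. Local lexing: a pair $(\textsl{Lex},\textsl{Sel})$ where $\textsl{Lex}$ assigns to each $t\in\mathfrak{T}$ a function $\textsl{Lex}(t)$ which, given $D\in\Sigma^*$ and $k\in\{0,\ldots,|D|\}$, returns a set of tokens $(t,c)$ with $k+|c|\le|D|$ and $c_i=D_{k+i}$ for $0\le i\le|c|-1$; and $\textsl{Sel}$ maps any two token sets $A\subseteq B$ to a token set $\textsl{Sel}(A,B)$ with $A\subseteq\textsl{Sel}(A,B)\subseteq B$. Semantics: $\operatorname{limit} f\,X=\bigcup_{n\ge0}f^n(X)$. $\operatorname{Append}_k\,T\,P=P\cup\{pt\mid p\in P,\ |\overline{p}|=k,\ t\in T,\ [pt]\in\mathcal{L}_{\text{prefix}}\}$. For $k\in\{0,\ldots,|D|\}$: $\mathcal{X}_k=\{x\in\mathfrak{T}\times\Sigma^*\mid x\in\textsl{Lex}([x])(D,k)\}$; $\mathcal{P}_0^0=\{\varepsilon\}$; $\mathcal{W}_k^u=\{x\in\mathcal{X}_k\mid\exists p\in\mathcal{P}_k^u.\ |\overline{p}|=k\wedge[px]\in\mathcal{L}_{\text{prefix}}\}$; $\mathcal{Z}_k^0=\emptyset$;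 $\mathcal{Z}_k^{u+1}=\textsl{Sel}(\mathcal{Z}_k^u,\mathcal{W}_k^u)$; $\mathcal{P}_k^{u+1}=\operatorname{limit}(\operatorname{Append}_k\,\mathcal{Z}_k^{u+1})\,\mathcal{P}_k^u$; $\mathcal{P}_k^\infty=\bigcup_u\mathcal{P}_k^u$; $\mathcal{P}_{k+1}^0=\mathcal{P}_k^\infty$. Finally $\mathfrak{P}=\mathcal{P}_{|D|}^\infty$ and $\ell\ell(D)=\{p\in\mathfrak{P}\mid|\overline{p}|=|D|\wedge[p]\in\mathcal{L}\}$. Earley items: an item is $(N\rightarrow\alpha\bullet\beta,i,j)$ with $(N\rightarrow\alpha\beta)\in\mathfrak{R}$, $0\le i\le j\le|D|$. For item sets $I$, token sets $T$, position $k$: $\operatorname{Init}=\{(\mathfrak{S}\rightarrow\bullet\alpha,0,0)\mid\mathfrak{S}\rightarrow\alpha\in\mathfrak{R}\}$; $\operatorname{Predict}\,k\,I=I\cup\{(M\rightarrow\bullet\gamma,k,k)\mid\exists N,\alpha,\beta,i.\ (N\rightarrow\alpha\bullet M\beta,i,k)\in I\wedge(M\rightarrow\gamma)\in\mathfrak{R}\}$; $\operatorname{Complete}\,k\,I=I\cup\{(N\rightarrow\alpha M\bullet\beta,i,k)\mid\exists j,\gamma.\ (N\rightarrow\alpha\bullet M\beta,i,j)\in I\wedge(M\rightarrow\gamma\bullet,j,k)\in I\}$; $\operatorname{Tokens}\,T\,k\,I=\textsl{Sel}\big(T,\{x\mid\exists X\in\mathfrak{T},N,\alpha,\beta,i.\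 (N\rightarrow\alpha\bullet X\beta,i,k)\in I\wedge x\in\textsl{Lex}(X)(D,k)\}\big)$; $\operatorname{Scan}\,T\,k\,I=I\cup\{(N\rightarrow\alpha X\bullet\beta,i,k+|c|)\mid(X,c)\in T\wedge(N\rightarrow\alpha\bullet X\beta,i,k)\in I\}$; $\pi_k\,T\,I=\operatorname{limit}(\operatorname{Scan}\,T\,k\circ\operatorname{Complete}\,k\circ\operatorname{Predict}\,k)\,I$. Then $\mathcal{J}_0^0=\pi_0\,\emptyset\,\operatorname{Init}$; $\mathcal{T}_k^0=\emptyset$; $\mathcal{T}_k^{u+1}=\operatorname{Tokens}\,\mathcal{T}_k^u\,k\,\mathcal{J}_k^u$; $\mathcal{J}_k^{u+1}=\pi_k\,\mathcal{T}_k^{u+1}\,\mathcal{J}_k^u$; $\mathcal{I}_k=\bigcup_u\mathcal{J}_k^u$; $\mathcal{J}_{k+1}^0=\pi_{k+1}\,\emptyset\,\mathcal{I}_k$; and $\mathfrak{I}=\mathcal{I}_{|D|}$. *)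

theory Defs
  imports Main
begin

text \<open>Characters form the type 'c (the character set Sigma is UNIV :: 'c set).\<close>

definition derives1 :: "('a \<times> 'a list) set \<Rightarrow> 'a list \<Rightarrow> 'a list \<Rightarrow> bool" where
  "derives1 R \<alpha> \<beta> \<longleftrightarrow> (\<exists>\<alpha>0 N \<alpha>1 \<gamma>. \<alpha> = \<alpha>0 @ [N] @ \<alpha>1 \<and> \<beta> = \<alpha>0 @ \<gamma> @ \<alpha>1 \<and> (N, \<gamma>) \<in> R)"

definition derives :: "('a \<times> 'a list) set \<Rightarrow> 'a list \<Rightarrow> 'a list \<Rightarrow> bool" where
  "derives R = (derives1 R)\<^sup>*\<^sup>*"

definition Lang :: "'a set \<Rightarrow> 'a set \<Rightarrow> ('a \<times> 'a list) set \<Rightarrow> 'a \<Rightarrow> 'a list set" where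
  "Lang NN TT R S = {w. w \<in> lists TT \<and> derives R [S] w}"

definition Lprefix :: "'a set \<Rightarrow> 'a set \<Rightarrow> ('a \<times> 'a list) set \<Rightarrow> 'a \<Rightarrow> 'a list set" where
  "Lprefix NN TT R S = {w. w \<in> lists TT \<and> (\<exists>\<alpha> \<in> lists (NN \<union> TT). derives R [S] (w @ \<alpha>))}"

definition is_cfg :: "'a set \<Rightarrow> 'a set \<Rightarrow> ('a \<times> 'a list) set \<Rightarrow> 'a \<Rightarrow> bool" where
  "is_cfg NN TT R S \<longleftrightarrow> NN \<inter> TT = {} \<and> S \<in> NN \<and> R \<subseteq> NN \<times> lists (NN \<union> TT)"

type_synonym ('a, 'c) token = "'a \<times> 'c list"
type_synonym ('a, 'c) path = "('a, 'c) token list"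

definition terms_of :: "('a, 'c) path \<Rightarrow> 'a list" where
  "terms_of p = map fst p"

definition chars_of :: "('a, 'c) path \<Rightarrow> 'c list" where
  "chars_of p = concat (map snd p)"

text \<open>Lex t D k: the tokens recognised for terminal t in document D at position k.\<close>
definition is_local_lexing ::
  "'a set \<Rightarrow> ('a \<Rightarrow> 'c list \<Rightarrow> nat \<Rightarrow> ('a, 'c) token set)
    \<Rightarrow> (('a, 'c) token set \<Rightarrow> ('a, 'c) token set \<Rightarrow> ('a, 'c) token set) \<Rightarrow> bool" where
  "is_local_lexing TT Lex Sel \<longleftrightarrow>
     (\<forall>t \<in> TT. \<forall>D k. k \<le> length D \<longrightarrow> (\<forall>x \<in> Lex t D k.
        fst x = t \<and> k + length (snd x) \<le> length D \<and>
        (\<forall>i < length (snd x). snd x ! i = D ! (k + i)))) \<and>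
     (\<forall>A B. A \<subseteq> B \<longrightarrow> A \<subseteq> Sel A B \<and> Sel A B \<subseteq> B)"

definition limit :: "('x set \<Rightarrow> 'x set) \<Rightarrow> 'x set \<Rightarrow> 'x set" where
  "limit f X = (\<Union>n. (f ^^ n) X)"

definition Append :: "'a list set \<Rightarrow> nat \<Rightarrow> ('a, 'c) token set \<Rightarrow> ('a, 'c) path set \<Rightarrow> ('a, 'c) path set" where
  "Append Lp k T P = P \<union> {p @ [t] | p t. p \<in> P \<and> length (chars_of p) = k \<and> t \<in> T \<and> terms_of (p @ [t]) \<in> Lp}"

definition Xk :: "'a set \<Rightarrow> ('a \<Rightarrow> 'c list \<Rightarrow> nat \<Rightarrow> ('a, 'c) token set) \<Rightarrow> 'c list \<Rightarrow> nat \<Rightarrow> ('a, 'c) token set" where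
  "Xk TT Lex D k = {x. fst x \<in> TT \<and> x \<in> Lex (fst x) D k}"

definition Wk :: "'a set \<Rightarrow> ('a \<Rightarrow> 'c list \<Rightarrow> nat \<Rightarrow> ('a, 'c) token set) \<Rightarrow> 'c list \<Rightarrow> 'a list set
    \<Rightarrow> nat \<Rightarrow> ('a, 'c) path set \<Rightarrow> ('a, 'c) token set" where
  "Wk TT Lex D Lp k P = {x \<in> Xk TT Lex D k. \<exists>p \<in> P. length (chars_of p) = k \<and> terms_of (p @ [x]) \<in> Lp}"

text \<open>PZ ... k P0 u = (P_k^u, Z_k^u) where P0 = P_k^0.\<close>
primrec PZ :: "'a set \<Rightarrow> ('a \<Rightarrow> 'c list \<Rightarrow> nat \<Rightarrow> ('a, 'c) token set)
    \<Rightarrow> (('a, 'c) token set \<Rightarrow> ('a, 'c) token set \<Rightarrow> ('a, 'c) token set) \<Rightarrow> 'c list \<Rightarrow> 'a list set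
    \<Rightarrow> nat \<Rightarrow> ('a, 'c) path set \<Rightarrow> nat \<Rightarrow> ('a, 'c) path set \<times> ('a, 'c) token set" where
  "PZ TT Lex Sel D Lp k P0 0 = (P0, {})"
| "PZ TT Lex Sel D Lp k P0 (Suc u) =
     (let Z' = Sel (snd (PZ TT Lex Sel D Lp k P0 u)) (Wk TT Lex D Lp k (fst (PZ TT Lex Sel D Lp k P0 u)))
      in (limit (Append Lp k Z') (fst (PZ TT Lex Sel D Lp k P0 u)), Z'))"

definition Pinf where
  "Pinf TT Lex Sel D Lp k P0 = (\<Union>u. fst (PZ TT Lex Sel D Lp k P0 u))"

text \<open>Pstart ... k = P_k^0.\<close>
primrec Pstart where
  "Pstart TT Lex Sel D Lp 0 = {[]}"
| "Pstart TT Lex Sel D Lp (Suc k) = Pinf TT Lex Sel D Lp k (Pstart TT Lex Sel D Lp k)"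

definition PP :: "'a set \<Rightarrow> 'a set \<Rightarrow> ('a \<times> 'a list) set \<Rightarrow> 'a
    \<Rightarrow> ('a \<Rightarrow> 'c list \<Rightarrow> nat \<Rightarrow> ('a, 'c) token set)
    \<Rightarrow> (('a, 'c) token set \<Rightarrow> ('a, 'c) token set \<Rightarrow> ('a, 'c) token set) \<Rightarrow> 'c list \<Rightarrow> ('a, 'c) path set" where
  "PP NN TT R S Lex Sel D =
     (let Lp = Lprefix NN TT R S
      in Pinf TT Lex Sel D Lp (length D) (Pstart TT Lex Sel D Lp (length D)))"

definition ll :: "'a set \<Rightarrow> 'a set \<Rightarrow> ('a \<times> 'a list) set \<Rightarrow> 'a
    \<Rightarrow> ('a \<Rightarrow> 'c list \<Rightarrow> nat \<Rightarrow> ('a, 'c) token set)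
    \<Rightarrow> (('a, 'c) token set \<Rightarrow> ('a, 'c) token set \<Rightarrow> ('a, 'c) token set) \<Rightarrow> 'c list \<Rightarrow> ('a, 'c) path set" where
  "ll NN TT R S Lex Sel D =
     {p \<in> PP NN TT R S Lex Sel D. length (chars_of p) = length D \<and> terms_of p \<in> Lang NN TT R S}"

definition LangSigma where
  "LangSigma NN TT R S Lex Sel = {D. ll NN TT R S Lex Sel D \<noteq> {}}"

text \<open>Item N \<alpha> \<beta> i j stands for (N \<rightarrow> \<alpha> \<bullet> \<beta>, i, j).\<close>
datatype 'a item = Item 'a "'a list" "'a list" nat nat

definition Init :: "('a \<times> 'a list) set \<Rightarrow> 'a \<Rightarrow> 'a item set" where
  "Init R S = {Item S [] \<alpha> 0 0 | \<alpha>. (S, \<alpha>) \<in> R}"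

definition Predict :: "('a \<times> 'a list) set \<Rightarrow> nat \<Rightarrow> 'a item set \<Rightarrow> 'a item set" where
  "Predict R k I = I \<union> {Item M [] \<gamma> k k | M \<gamma>.
     (\<exists>N \<alpha> \<beta> i. Item N \<alpha> (M # \<beta>) i k \<in> I) \<and> (M, \<gamma>) \<in> R}"

definition Complete :: "nat \<Rightarrow> 'a item set \<Rightarrow> 'a item set" where
  "Complete k I = I \<union> {Item N (\<alpha> @ [M]) \<beta> i k | N \<alpha> M \<beta> i.
     \<exists>j \<gamma>. Item N \<alpha> (M # \<beta>) i j \<in> I \<and> Item M \<gamma> [] j k \<in> I}"

definition Tokens :: "'a set \<Rightarrow> ('a \<Rightarrow> 'c list \<Rightarrow> nat \<Rightarrow> ('a, 'c) token set)
    \<Rightarrow> (('a, 'c) token set \<Rightarrow> ('a, 'c) token set \<Rightarrow> ('a, 'c) token set) \<Rightarrow> 'c list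
    \<Rightarrow> ('a, 'c) token set \<Rightarrow> nat \<Rightarrow> 'a item set \<Rightarrow> ('a, 'c) token set" where
  "Tokens TT Lex Sel D T k I = Sel T {x. \<exists>X N \<alpha> \<beta> i. X \<in> TT \<and> Item N \<alpha> (X # \<beta>) i k \<in> I \<and> x \<in> Lex X D k}"

definition Scan :: "('a, 'c) token set \<Rightarrow> nat \<Rightarrow> 'a item set \<Rightarrow> 'a item set" where
  "Scan T k I = I \<union> {Item N (\<alpha> @ [X]) \<beta> i (k + length c) | N \<alpha> X \<beta> i c.
     (X, c) \<in> T \<and> Item N \<alpha> (X # \<beta>) i k \<in> I}"

definition pi :: "('a \<times> 'a list) set \<Rightarrow> nat \<Rightarrow> ('a, 'c) token set \<Rightarrow> 'a item set \<Rightarrow> 'a item set" where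
  "pi R k T I = limit (Scan T k \<circ> Complete k \<circ> Predict R k) I"

text \<open>JT ... k J0 u = (J_k^u, T_k^u) where J0 = J_k^0.\<close>
primrec JT :: "('a \<times> 'a list) set \<Rightarrow> 'a set \<Rightarrow> ('a \<Rightarrow> 'c list \<Rightarrow> nat \<Rightarrow> ('a, 'c) token set)
    \<Rightarrow> (('a, 'c) token set \<Rightarrow> ('a, 'c) token set \<Rightarrow> ('a, 'c) token set) \<Rightarrow> 'c list
    \<Rightarrow> nat \<Rightarrow> 'a item set \<Rightarrow> nat \<Rightarrow> 'a item set \<times> ('a, 'c) token set" where
  "JT R TT Lex Sel D k J0 0 = (J0, {})"
| "JT R TT Lex Sel D k J0 (Suc u) =
     (let T' = Tokens TT Lex Sel D (snd (JT R TT Lex Sel D k J0 u)) k (fst (JT R TT Lex Sel D k J0 u))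
      in (pi R k T' (fst (JT R TT Lex Sel D k J0 u)), T'))"

definition Ik where
  "Ik R TT Lex Sel D k J0 = (\<Union>u. fst (JT R TT Lex Sel D k J0 u))"

text \<open>Jstart ... k = J_k^0.\<close>
primrec Jstart :: "('a \<times> 'a list) set \<Rightarrow> 'a \<Rightarrow> 'a set \<Rightarrow> ('a \<Rightarrow> 'c list \<Rightarrow> nat \<Rightarrow> ('a, 'c) token set)
    \<Rightarrow> (('a, 'c) token set \<Rightarrow> ('a, 'c) token set \<Rightarrow> ('a, 'c) token set) \<Rightarrow> 'c list
    \<Rightarrow> nat \<Rightarrow> 'a item set" where
  "Jstart R S TT Lex Sel D 0 = pi R 0 ({} :: ('a, 'c) token set) (Init R S)"
| "Jstart R S TT Lex Sel D (Suc k) =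
     pi R (Suc k) ({} :: ('a, 'c) token set) (Ik R TT Lex Sel D k (Jstart R S TT Lex Sel D k))"

definition II :: "('a \<times> 'a list) set \<Rightarrow> 'a \<Rightarrow> 'a set \<Rightarrow> ('a \<Rightarrow> 'c list \<Rightarrow> nat \<Rightarrow> ('a, 'c) token set)
    \<Rightarrow> (('a, 'c) token set \<Rightarrow> ('a, 'c) token set \<Rightarrow> ('a, 'c) token set) \<Rightarrow> 'c list \<Rightarrow> 'a item set" where
  "II R S TT Lex Sel D = Ik R TT Lex Sel D (length D) (Jstart R S TT Lex Sel D (length D))"

end

theory Submission
  imports Defs
begin



definition clen :: "('a \<times> 'c list) list \<Rightarrow> nat" where "clen p = length (chars_of p)"

lemma clen_simps[simp]: "clen [] = 0" "clen (t#q) = length (snd t) + clen q" "clen (p@q) = clen p + clen q"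
  by (simp_all add: clen_def chars_of_def)

primrec admo :: "(nat \<Rightarrow> ('a \<times> 'c list) set) \<Rightarrow> nat \<Rightarrow> ('a \<times> 'c list) list \<Rightarrow> bool" where
  "admo F j [] = True"
| "admo F j (t#q) = (t \<in> F j \<and> admo F (j + length (snd t)) q)"

lemma admo_append[simp]: "admo F j (p@q) \<longleftrightarrow> admo F j p \<and> admo F (j + clen p) q"
  by (induction p arbitrary: j) (auto simp: add.assoc)

lemma admo_mono: "admo F j p \<Longrightarrow> (\<And>i. F i \<subseteq> G i) \<Longrightarrow> admo G j p"
  by (induction p arbitrary: j) auto

lemma admo_restrict: "admo G j p \<Longrightarrow> (\<And>i. i \<le> j + clen p \<Longrightarrow> G i \<subseteq> F i) \<Longrightarrow> admo F j p"
proof (induction p arbitrary: j)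
  case Nil then show ?case by simp
next
  case (Cons t q)
  have "t \<in> F j" using Cons.prems(1) Cons.prems(2)[of j] by auto
  moreover have "admo F (j + length (snd t)) q"
    using Cons.prems by (intro Cons.IH) (auto simp: add.assoc)
  ultimately show ?case by simp
qed

lemma admo_wf: "admo F j p \<Longrightarrow> (\<And>i t. t \<in> F i \<Longrightarrow> fst t \<in> TT) \<Longrightarrow> map fst p \<in> lists TT"
  by (induction p arbitrary: j) auto

lemma admo_chain:
  assumes "\<And>i. F i = (\<Union>u. G u i)" "\<And>u i. G u i \<subseteq> G (Suc u) i"
  shows "admo F j p \<Longrightarrow> \<exists>u. admo (G u) j p"
proof (induction p arbitrary: j)
  case Nil then show ?case by simp
next
  case (Cons t q)
  have mono: "u \<le> v \<Longrightarrow> G u i \<subseteq> G v i" for u v i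
    using lift_Suc_mono_le[of "\<lambda>u. G u i"] assms(2) by blast
  have tF: "t \<in> F j" and qF: "admo F (j + length (snd t)) q" using Cons.prems by simp_all
  from tF obtain u1 where u1: "t \<in> G u1 j" unfolding assms(1) by blast
  from Cons.IH[OF qF] obtain u2 where u2: "admo (G u2) (j + length (snd t)) q" by blast
  have "t \<in> G (max u1 u2) j" using u1 mono[of u1 "max u1 u2" j] by auto
  moreover have "admo (G (max u1 u2)) (j + length (snd t)) q"
    by (rule admo_mono[OF u2]) (rule mono, simp)
  ultimately show ?case by auto
qed

inductive Der :: "('a \<times> 'a list) set \<Rightarrow> 'a list \<Rightarrow> 'a list \<Rightarrow> bool" for R where
  Der_nil: "Der R [] []"
| Der_keep: "Der R a w \<Longrightarrow> Der R (X#a) (X#w)"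
| Der_rule: "(M, g) \<in> R \<Longrightarrow> Der R g u \<Longrightarrow> Der R a w \<Longrightarrow> Der R (M#a) (u@w)"

lemma Der_refl: "Der R a a"
  by (induction a) (auto intro: Der.intros)

lemma Der_append: "Der R a u \<Longrightarrow> Der R b v \<Longrightarrow> Der R (a@b) (u@v)"
proof (induction rule: Der.induct)
  case Der_nil then show ?case by simp
next
  case (Der_keep a w X) then show ?case by (simp add: Der.Der_keep)
next
  case (Der_rule M g u a w) then show ?case using Der.Der_rule[of M g R u "a@b" "w@v"] by simp
qed

lemma Der_nil_inv: "Der R [] w \<Longrightarrow> w = []"
  by (erule Der.cases) auto

lemma Der_Cons_inv: "Der R (x#a) w \<Longrightarrow> (\<exists>w'. w = x#w' \<and> Der R a w') \<or> (\<exists>g u w'. (x,g) \<in> R \<and> Der R g u \<and> Der R a w' \<and> w = u@w')"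
  by (erule Der.cases) auto

lemma Der_split: "Der R (a@b) w \<Longrightarrow> \<exists>w1 w2. w = w1@w2 \<and> Der R a w1 \<and> Der R b w2"
proof (induction a arbitrary: w)
  case Nil then show ?case by (auto intro: Der_nil)
next
  case (Cons x a)
  have "Der R (x#(a@b)) w" using Cons.prems by simp
  from Der_Cons_inv[OF this] show ?case
  proof (elim disjE exE conjE)
    fix w' assume "w = x#w'" "Der R (a@b) w'"
    from Cons.IH[OF this(2)] obtain w1 w2 where "w' = w1@w2" "Der R a w1" "Der R b w2" by blast
    then have "w = (x#w1) @ w2 \<and> Der R (x#a) (x#w1) \<and> Der R b w2" using \<open>w = x#w'\<close> by (simp add: Der.Der_keep)
    then show ?thesis by blast
  next
    fix g u w' assume h: "(x,g) \<in> R" "Der R g u" "Der R (a@b) w'" "w = u@w'"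
    from Cons.IH[OF h(3)] obtain w1 w2 where "w' = w1@w2" "Der R a w1" "Der R b w2" by blast
    then have "w = (u@w1) @ w2 \<and> Der R (x#a) (u@w1) \<and> Der R b w2" using h by (simp add: Der.Der_rule)
    then show ?thesis by blast
  qed
qed

lemma Der_trans: "Der R a v \<Longrightarrow> Der R v w \<Longrightarrow> Der R a w"
proof (induction arbitrary: w rule: Der.induct)
  case Der_nil then show ?case by (simp add: Der_nil_inv)
next
  case (Der_keep a v X)
  from Der_Cons_inv[OF Der_keep.prems] show ?case
  proof (elim disjE exE conjE)
    fix w' assume "w = X#w'" "Der R v w'"
    then show ?thesis using Der_keep.IH[of w'] Der.Der_keep[of R a w' X] by simp
  next
    fix g u w' assume "(X,g) \<in> R" "Der R g u" "Der R v w'" "w = u@w'"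
    then show ?thesis using Der_keep.IH[of w'] Der.Der_rule[of X g R u a w'] by simp
  qed
next
  case (Der_rule M g u a v)
  from Der_split[OF Der_rule.prems] obtain w1 w2 where "w = w1@w2" "Der R u w1" "Der R v w2" by blast
  then show ?case using Der_rule.IH(1)[of w1] Der_rule.IH(2)[of w2] Der_rule.hyps(1) Der.Der_rule[of M g R w1 a w2] by simp
qed

lemma derives1_cong: "derives1 R a b \<Longrightarrow> derives1 R (x@a@y) (x@b@y)"
  unfolding derives1_def by (metis append.assoc append_Cons)

lemma derives_cong: "derives R a b \<Longrightarrow> derives R (x@a@y) (x@b@y)"
  unfolding derives_def
proof (induction rule: rtranclp_induct)
  case base then show ?case by simp
next
  case (step b c) then show ?case by (meson derives1_cong rtranclp.rtrancl_into_rtrancl)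
qed

lemma derives_refl: "derives R a a" by (simp add: derives_def)

lemma derives_trans: "derives R a b \<Longrightarrow> derives R b c \<Longrightarrow> derives R a c"
  unfolding derives_def by auto

lemma derives_step: "(N, g) \<in> R \<Longrightarrow> derives R (x @ N # y) (x @ g @ y)"
  unfolding derives_def derives1_def by (intro r_into_rtranclp) fastforce

lemma Der_derives: "Der R a w \<Longrightarrow> derives R a w"
proof (induction rule: Der.induct)
  case Der_nil then show ?case by (rule derives_refl)
next
  case (Der_keep a w X) then show ?case using derives_cong[of R a w "[X]" "[]"] by simp
next
  case (Der_rule M g u a w)
  have "derives R (M#a) (g@a)" using derives_step[OF Der_rule.hyps(1), of "[]" a] by simp
  moreover have "derives R (g@a) (u@a)" using derives_cong[OF Der_rule.IH(1), of "[]" a] by simp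
  moreover have "derives R (u@a) (u@w)" using derives_cong[OF Der_rule.IH(2), of u "[]"] by simp
  ultimately show ?case by (meson derives_trans)
qed

lemma derives_Der: "derives R a w \<Longrightarrow> Der R a w"
  unfolding derives_def
proof (induction rule: rtranclp_induct)
  case base then show ?case by (rule Der_refl)
next
  case (step b c)
  then obtain b0 N b1 g where b: "b = b0 @ [N] @ b1" "c = b0 @ g @ b1" "(N, g) \<in> R"
    unfolding derives1_def by blast
  have "Der R (N#b1) (g@b1)" using Der.Der_rule[OF b(3) Der_refl Der_refl] .
  then have "Der R b c" using Der_append[OF Der_refl[of R b0]] b by simp
  then show ?case using step.IH Der_trans by blast
qed




inductive Vi :: "('a \<times> 'a list) set \<Rightarrow> 'a \<Rightarrow> (nat \<Rightarrow> ('a \<times> 'c list) set) \<Rightarrow> nat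
    \<Rightarrow> 'a \<Rightarrow> 'a list \<Rightarrow> 'a list \<Rightarrow> nat \<Rightarrow> nat \<Rightarrow> bool" for R S F k where
  vinit: "(S, a) \<in> R \<Longrightarrow> Vi R S F k S [] a 0 0"
| vpred: "Vi R S F k N a (M#b) i j \<Longrightarrow> j \<le> k \<Longrightarrow> (M, g) \<in> R \<Longrightarrow> Vi R S F k M [] g j j"
| vcomp: "Vi R S F k N a (M#b) i j \<Longrightarrow> Vi R S F k M g [] j l \<Longrightarrow> l \<le> k \<Longrightarrow> Vi R S F k N (a@[M]) b i l"
| vscan: "Vi R S F k N a (X#b) i j \<Longrightarrow> j \<le> k \<Longrightarrow> (X, c) \<in> F j \<Longrightarrow> Vi R S F k N (a@[X]) b i (j + length c)"

lemma Vi_le: "Vi R S F k N a b i j \<Longrightarrow> i \<le> j"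
  by (induction rule: Vi.induct) auto

lemma Vi_mono: "Vi R S F k N a b i j \<Longrightarrow> (\<And>x. F x \<subseteq> F' x) \<Longrightarrow> k \<le> k' \<Longrightarrow> Vi R S F' k' N a b i j"
proof (induction rule: Vi.induct)
  case (vinit a) then show ?case by (simp add: Vi.vinit)
next
  case (vpred N a M b i j g) then show ?case using Vi.vpred[of R S F' k' N a M b i j g] by simp
next
  case (vcomp N a M b i j g l) then show ?case using Vi.vcomp[of R S F' k' N a M b i j g l] by simp
next
  case (vscan N a X b i j c) then show ?case using Vi.vscan[of R S F' k' N a X b i j c] by auto
qed

lemma vi_G: "Der R b w \<Longrightarrow> w = map fst q \<Longrightarrow> Vi R S F k N a (b@c) i j \<Longrightarrow> admo F j q
   \<Longrightarrow> j + clen q \<le> k \<Longrightarrow> Vi R S F k N (a@b) c i (j + clen q)"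
proof (induction b w arbitrary: N a c i j q rule: Der.induct)
  case Der_nil then show ?case by simp
next
  case (Der_keep b w X)
  from Der_keep.prems(1) obtain t q' where q: "q = t#q'" "fst t = X" "w = map fst q'"
    by (auto simp: Cons_eq_map_conv)
  obtain c0 where t: "t = (X, c0)" using q(2) by (cases t) auto
  have tF: "(X, c0) \<in> F j" and qF: "admo F (j + length c0) q'" using Der_keep.prems(3) q(1) t by auto
  have "Vi R S F k N a (X # (b @ c)) i j" using Der_keep.prems(2) by simp
  from Vi.vscan[OF this _ tF] have "Vi R S F k N (a @ [X]) (b @ c) i (j + length c0)"
    using Der_keep.prems(4) by simp
  from Der_keep.IH[OF q(3) this qF] have "Vi R S F k N (a @ [X] @ b) c i (j + length c0 + clen q')"
    using Der_keep.prems(4) q(1) t by (simp add: add.assoc)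
  then show ?case using q(1) t by (simp add: add.assoc)
next
  case (Der_rule M g u b w)
  from Der_rule.prems(1) obtain q1 q2 where q: "q = q1 @ q2" "u = map fst q1" "w = map fst q2"
    by (metis map_eq_append_conv)
  have adm1: "admo F j q1" and adm2: "admo F (j + clen q1) q2" using Der_rule.prems(3) q(1) by auto
  have it: "Vi R S F k N a (M # (b @ c)) i j" using Der_rule.prems(2) by simp
  have jk: "j \<le> k" using Der_rule.prems(4) by simp
  have "Vi R S F k M [] (g @ []) j j" using Vi.vpred[OF it jk Der_rule.hyps(1)] by simp
  from Der_rule.IH(1)[OF q(2) this adm1] have "Vi R S F k M g [] j (j + clen q1)"
    using Der_rule.prems(4) q(1) by simp
  from Vi.vcomp[OF it this] have "Vi R S F k N (a @ [M]) (b @ c) i (j + clen q1)"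
    using Der_rule.prems(4) q(1) by simp
  from Der_rule.IH(2)[OF q(3) this adm2] have "Vi R S F k N (a @ [M] @ b) c i (j + clen q1 + clen q2)"
    using Der_rule.prems(4) q(1) by (simp add: add.assoc)
  then show ?case using q(1) by (simp add: add.assoc)
qed

lemma vi_H: "Der R b v \<Longrightarrow> v = map fst q @ X # g \<Longrightarrow> Vi R S F k N a (b@c) i j \<Longrightarrow> admo F j q
   \<Longrightarrow> j + clen q \<le> k \<Longrightarrow> \<exists>N' a' c' i'. Vi R S F k N' a' (X#c') i' (j + clen q)"
proof (induction b v arbitrary: N a c i j q g rule: Der.induct)
  case Der_nil then show ?case by simp
next
  case (Der_keep b w Y)
  show ?case
  proof (cases q)
    case Nil
    then have "Y = X" using Der_keep.prems(1) by simp
    then show ?thesis using Der_keep.prems(2) Nil by auto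
  next
    case (Cons t q')
    then have yt: "fst t = Y" and w: "w = map fst q' @ X # g" using Der_keep.prems(1) by auto
    obtain c0 where t: "t = (Y, c0)" using yt by (cases t) auto
    have tF: "(Y, c0) \<in> F j" and qF: "admo F (j + length c0) q'" using Der_keep.prems(3) Cons t by auto
    have "Vi R S F k N a (Y # (b @ c)) i j" using Der_keep.prems(2) by simp
    from Vi.vscan[OF this _ tF] have "Vi R S F k N (a @ [Y]) (b @ c) i (j + length c0)"
      using Der_keep.prems(4) by simp
    from Der_keep.IH[OF w this qF] show ?thesis
      using Der_keep.prems(4) Cons t by (simp add: add.assoc)
  qed
next
  case (Der_rule M g' u b w)
  have it: "Vi R S F k N a (M # (b @ c)) i j" using Der_rule.prems(2) by simp
  have jk: "j \<le> k" using Der_rule.prems(4) by simp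
  have pr: "Vi R S F k M [] (g' @ []) j j" using Vi.vpred[OF it jk Der_rule.hyps(1)] by simp
  from Der_rule.prems(1) obtain us where
    "(u = map fst q @ us \<and> us @ w = X # g) \<or> (u @ us = map fst q \<and> w = us @ X # g)"
    by (auto simp: append_eq_append_conv2)
  then show ?case
  proof (elim disjE conjE)
    assume u: "u = map fst q @ us" and us: "us @ w = X # g"
    show ?thesis
    proof (cases us)
      case Nil
      then have u': "u = map fst q" using u by auto
      from vi_G[OF Der_rule.hyps(2) u' pr Der_rule.prems(3,4)] have "Vi R S F k M g' [] j (j + clen q)" by simp
      from Vi.vcomp[OF it this] have "Vi R S F k N (a @ [M]) (b @ c) i (j + clen q)"
        using Der_rule.prems(4) by simp
      moreover have "w = map fst [] @ X # g" using us Nil by simp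
      ultimately have "\<exists>N' a' c' i'. Vi R S F k N' a' (X # c') i' (j + clen q + clen ([]::('a\<times>'c list) list))"
        using Der_rule.IH(2) Der_rule.prems(4) by (metis add.right_neutral admo.simps(1) clen_simps(1))
      then show ?thesis by simp
    next
      case (Cons y us')
      then have "u = map fst q @ X # us'" using u us by simp
      from Der_rule.IH(1)[OF this pr Der_rule.prems(3,4)] show ?thesis .
    qed
  next
    assume u: "u @ us = map fst q" and w: "w = us @ X # g"
    from u obtain q1 q2 where q: "q = q1 @ q2" "u = map fst q1" "us = map fst q2"
      by (metis map_eq_append_conv)
    have adm1: "admo F j q1" and adm2: "admo F (j + clen q1) q2" using Der_rule.prems(3) q(1) by auto
    from vi_G[OF Der_rule.hyps(2) q(2) pr adm1] have "Vi R S F k M g' [] j (j + clen q1)"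
      using Der_rule.prems(4) q(1) by simp
    from Vi.vcomp[OF it this] have "Vi R S F k N (a @ [M]) (b @ c) i (j + clen q1)"
      using Der_rule.prems(4) q(1) by simp
    from Der_rule.IH(2)[OF _ this adm2] show ?thesis
      using w q Der_rule.prems(4) by (simp add: add.assoc)
  qed
qed

lemma vi_sound: "Vi R S F k N a b i j \<Longrightarrow> (N, a@b) \<in> R \<and> (\<exists>p1 p2 \<delta>. admo F 0 (p1@p2) \<and> clen p1 = i
   \<and> clen p1 + clen p2 = j \<and> derives R [S] (map fst p1 @ N # \<delta>) \<and> Der R a (map fst p2))"
proof (induction rule: Vi.induct)
  case (vinit a)
  have "admo F 0 ([]@[]) \<and> clen [] = (0::nat) \<and> clen [] + clen [] = (0::nat) \<and> derives R [S] (map fst [] @ S # [])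
     \<and> Der R [] (map fst ([]::('a\<times>'c list) list))" by (simp add: derives_refl Der_nil)
  moreover have "(S, [] @ a) \<in> R" using vinit by simp
  ultimately show ?case by blast
next
  case (vpred N a M b i j g)
  from vpred.IH obtain p1 p2 \<delta> where r: "(N, a @ M # b) \<in> R" and h: "admo F 0 (p1@p2)" "clen p1 = i"
    "clen p1 + clen p2 = j" "derives R [S] (map fst p1 @ N # \<delta>)" "Der R a (map fst p2)" by blast
  have "derives R (map fst p1 @ N # \<delta>) (map fst p1 @ (a @ M # b) @ \<delta>)" by (rule derives_step[OF r])
  moreover have "derives R (map fst p1 @ a @ ((M # b) @ \<delta>)) (map fst p1 @ map fst p2 @ ((M # b) @ \<delta>))"
    by (rule derives_cong[OF Der_derives[OF h(5)]])
  ultimately have "derives R [S] (map fst (p1 @ p2) @ M # (b @ \<delta>))"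
    using h(4) by (simp add: derives_trans[OF derives_trans])
  then have "admo F 0 ((p1@p2)@[]) \<and> clen (p1@p2) = j \<and> clen (p1@p2) + clen [] = j \<and> derives R [S] (map fst (p1@p2) @ M # (b @ \<delta>))
     \<and> Der R [] (map fst ([]::('a\<times>'c list) list))" using h by (simp add: Der_nil)
  moreover have "(M, [] @ g) \<in> R" using vpred.hyps by simp
  ultimately show ?case by blast
next
  case (vcomp N a M b i j g l)
  from vcomp.IH(1) obtain p1 p2 \<delta> where r: "(N, a @ M # b) \<in> R" and h: "admo F 0 (p1@p2)" "clen p1 = i"
    "clen p1 + clen p2 = j" "derives R [S] (map fst p1 @ N # \<delta>)" "Der R a (map fst p2)" by blast
  from vcomp.IH(2) obtain q1 q2 \<delta>' where r2: "(M, g @ []) \<in> R" and h2: "admo F 0 (q1@q2)" "clen q1 = j"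
    "clen q1 + clen q2 = l" "Der R g (map fst q2)" by blast
  have "admo F 0 (p1 @ p2 @ q2)" using h h2 by simp
  moreover have "Der R (a @ [M]) (map fst p2 @ map fst q2 @ [])"
    using Der_append[OF h(5) Der.Der_rule[OF _ h2(4) Der_nil]] r2 by simp
  ultimately have "admo F 0 (p1@(p2@q2)) \<and> clen p1 = i \<and> clen p1 + clen (p2@q2) = l \<and> derives R [S] (map fst p1 @ N # \<delta>)
     \<and> Der R (a @ [M]) (map fst (p2@q2))" using h h2 by simp
  moreover have "(N, (a @ [M]) @ b) \<in> R" using r by simp
  ultimately show ?case by blast
next
  case (vscan N a X b i j c)
  from vscan.IH obtain p1 p2 \<delta> where r: "(N, a @ X # b) \<in> R" and h: "admo F 0 (p1@p2)" "clen p1 = i"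
    "clen p1 + clen p2 = j" "derives R [S] (map fst p1 @ N # \<delta>)" "Der R a (map fst p2)" by blast
  have "admo F 0 (p1 @ p2 @ [(X,c)])" using h vscan.hyps by simp
  moreover have "Der R (a @ [X]) (map fst p2 @ [X])"
    using Der_append[OF h(5) Der.Der_keep[OF Der_nil]] by simp
  ultimately have "admo F 0 (p1@(p2@[(X,c)])) \<and> clen p1 = i \<and> clen p1 + clen (p2@[(X,c)]) = j + length c \<and> derives R [S] (map fst p1 @ N # \<delta>)
     \<and> Der R (a @ [X]) (map fst (p2@[(X,c)]))" using h by simp
  moreover have "(N, (a @ [X]) @ b) \<in> R" using r by simp
  ultimately show ?case by blast
qed




fun iend :: "'a item \<Rightarrow> nat" where "iend (Item N a b i j) = j"

definition stp :: "('a \<times> 'a list) set \<Rightarrow> nat \<Rightarrow> ('a, 'c) token set \<Rightarrow> 'a item set \<Rightarrow> 'a item set" where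
  "stp R k T Y = Scan T k (Complete k (Predict R k Y))"

lemma pi_alt: "pi R k T I = (\<Union>n. (stp R k T ^^ n) I)"
proof -
  have "Scan T k \<circ> Complete k \<circ> Predict R k = stp R k T" by (rule ext) (simp add: stp_def)
  then show ?thesis by (simp add: pi_def limit_def)
qed

lemma funpow_Suc': "(f ^^ Suc n) x = f ((f ^^ n) x)" by simp

lemma stp_low: "x \<in> stp R k T Y \<Longrightarrow> iend x < k \<Longrightarrow> x \<in> Y"
  unfolding stp_def by (auto simp: Scan_def Complete_def Predict_def)

lemma pi_low: "x \<in> pi R k T X \<Longrightarrow> iend x < k \<Longrightarrow> x \<in> X"
proof -
  assume x: "x \<in> pi R k T X" and e: "iend x < k"
  from x obtain n where "x \<in> (stp R k T ^^ n) X" unfolding pi_alt by blast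
  then show "x \<in> X"
  proof (induction n)
    case 0 then show ?case by simp
  next
    case (Suc n)
    have "x \<in> stp R k T ((stp R k T ^^ n) X)" using Suc.prems by (simp only: funpow_Suc')
    then show ?case using stp_low[OF _ e] Suc.IH by blast
  qed
qed

lemma pi_base: "X \<subseteq> pi R k T X"
  unfolding pi_alt by (metis UN_upper UNIV_I funpow_0)

lemma stp_infl: "Y \<subseteq> stp R k T Y"
  unfolding stp_def by (auto simp: Scan_def Complete_def Predict_def)

lemma stp_chain: "m \<le> n \<Longrightarrow> (stp R k T ^^ m) X \<subseteq> (stp R k T ^^ n) X"
proof -
  assume "m \<le> n"
  moreover have "(stp R k T ^^ i) X \<subseteq> (stp R k T ^^ Suc i) X" for i
    by (simp only: funpow_Suc') (rule stp_infl)
  ultimately show ?thesis using lift_Suc_mono_le[of "\<lambda>n. (stp R k T ^^ n) X"] by blast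
qed

lemma pi_stage: "x \<in> (stp R k T ^^ n) X \<Longrightarrow> x \<in> pi R k T X"
  unfolding pi_alt by blast

lemma pi_pred: "Item N a (M#b) i k \<in> pi R k T X \<Longrightarrow> (M,g) \<in> R \<Longrightarrow> Item M [] g k k \<in> pi R k T X"
proof -
  assume it: "Item N a (M#b) i k \<in> pi R k T X" and r: "(M,g) \<in> R"
  from it obtain n where n: "Item N a (M#b) i k \<in> (stp R k T ^^ n) X" unfolding pi_alt by blast
  have "Item M [] g k k \<in> Predict R k ((stp R k T ^^ n) X)"
    unfolding Predict_def using n r by blast
  then have "Item M [] g k k \<in> stp R k T ((stp R k T ^^ n) X)" by (simp add: stp_def Scan_def Complete_def)
  then have "Item M [] g k k \<in> (stp R k T ^^ Suc n) X" by (simp only: funpow_Suc')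
  then show ?thesis by (rule pi_stage)
qed

lemma pi_comp: "Item N a (M#b) i j \<in> pi R k T X \<Longrightarrow> Item M g [] j k \<in> pi R k T X \<Longrightarrow>
   Item N (a@[M]) b i k \<in> pi R k T X"
proof -
  assume i1: "Item N a (M#b) i j \<in> pi R k T X" and i2: "Item M g [] j k \<in> pi R k T X"
  from i1 obtain n1 where n1: "Item N a (M#b) i j \<in> (stp R k T ^^ n1) X" unfolding pi_alt by blast
  from i2 obtain n2 where n2: "Item M g [] j k \<in> (stp R k T ^^ n2) X" unfolding pi_alt by blast
  define Y where "Y = (stp R k T ^^ max n1 n2) X"
  have b1: "Item N a (M#b) i j \<in> Y" using subsetD[OF stp_chain[of n1 "max n1 n2"] n1] Y_def by simp
  have b2: "Item M g [] j k \<in> Y" using subsetD[OF stp_chain[of n2 "max n1 n2"] n2] Y_def by simp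
  have a1: "Item N a (M#b) i j \<in> Predict R k Y" using b1 by (simp add: Predict_def)
  have a2: "Item M g [] j k \<in> Predict R k Y" using b2 by (simp add: Predict_def)
  have "Item N (a@[M]) b i k \<in> Complete k (Predict R k Y)"
    unfolding Complete_def using a1 a2 by blast
  then have "Item N (a@[M]) b i k \<in> stp R k T Y" by (simp add: stp_def Scan_def)
  then have "Item N (a@[M]) b i k \<in> (stp R k T ^^ Suc (max n1 n2)) X" by (simp only: funpow_Suc' Y_def)
  then show ?thesis by (rule pi_stage)
qed

lemma pi_scan: "Item N a (X#b) i k \<in> pi R k T Y \<Longrightarrow> (X,c) \<in> T \<Longrightarrow> Item N (a@[X]) b i (k + length c) \<in> pi R k T Y"
proof -
  assume it: "Item N a (X#b) i k \<in> pi R k T Y" and t: "(X,c) \<in> T"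
  from it obtain n where n: "Item N a (X#b) i k \<in> (stp R k T ^^ n) Y" unfolding pi_alt by blast
  have "Item N a (X#b) i k \<in> Complete k (Predict R k ((stp R k T ^^ n) Y))"
    using n by (simp add: Predict_def Complete_def)
  then have "Item N (a@[X]) b i (k + length c) \<in> Scan T k (Complete k (Predict R k ((stp R k T ^^ n) Y)))"
    unfolding Scan_def using t by blast
  then have "Item N (a@[X]) b i (k + length c) \<in> (stp R k T ^^ Suc n) Y" by (simp only: funpow_Suc' stp_def)
  then show ?thesis by (rule pi_stage)
qed

lemma Predict_mono: "A \<subseteq> B \<Longrightarrow> Predict R k A \<subseteq> Predict R k B"
  unfolding Predict_def by blast
lemma Complete_mono: "A \<subseteq> B \<Longrightarrow> Complete k A \<subseteq> Complete k B"
  unfolding Complete_def by blast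
lemma Scan_mono: "A \<subseteq> B \<Longrightarrow> Scan T k A \<subseteq> Scan T k B"
  unfolding Scan_def by blast

lemma pi_least: "X \<subseteq> Y \<Longrightarrow> Predict R k Y \<subseteq> Y \<Longrightarrow> Complete k Y \<subseteq> Y \<Longrightarrow> Scan T k Y \<subseteq> Y \<Longrightarrow> pi R k T X \<subseteq> Y"
proof -
  assume h: "X \<subseteq> Y" "Predict R k Y \<subseteq> Y" "Complete k Y \<subseteq> Y" "Scan T k Y \<subseteq> Y"
  have "(stp R k T ^^ n) X \<subseteq> Y" for n
  proof (induction n)
    case 0 then show ?case using h by simp
  next
    case (Suc n)
    have "Predict R k ((stp R k T ^^ n) X) \<subseteq> Y" using Predict_mono[OF Suc] h by blast
    then have "Complete k (Predict R k ((stp R k T ^^ n) X)) \<subseteq> Y" using Complete_mono h by blast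
    then have "Scan T k (Complete k (Predict R k ((stp R k T ^^ n) X))) \<subseteq> Y" using Scan_mono h by blast
    then have "stp R k T ((stp R k T ^^ n) X) \<subseteq> Y" by (subst stp_def)
    then show ?case by (simp only: funpow_Suc')
  qed
  then show ?thesis unfolding pi_alt by blast
qed

definition Vs :: "('a \<times> 'a list) set \<Rightarrow> 'a \<Rightarrow> (nat \<Rightarrow> ('a \<times> 'c list) set) \<Rightarrow> nat \<Rightarrow> 'a item set" where
  "Vs R S F k = {x. case x of Item N a b i j \<Rightarrow> Vi R S F k N a b i j}"

lemma mem_Vs[simp]: "Item N a b i j \<in> Vs R S F k \<longleftrightarrow> Vi R S F k N a b i j"
  by (simp add: Vs_def)

lemma Vs_cases: "x \<in> Vs R S F k \<Longrightarrow> (\<And>N a b i j. x = Item N a b i j \<Longrightarrow> Vi R S F k N a b i j \<Longrightarrow> P) \<Longrightarrow> P"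
  by (cases x) auto

lemma V_sub_pi:
  assumes h1: "\<And>a. (S,a) \<in> R \<Longrightarrow> Item S [] a 0 0 \<in> pi R k T B"
    and h2: "\<And>N a M b i j g. Item N a (M#b) i j \<in> B \<Longrightarrow> j < k \<Longrightarrow> (M,g) \<in> R \<Longrightarrow> Item M [] g j j \<in> B"
    and h3: "\<And>N a M b i j g l. Item N a (M#b) i j \<in> B \<Longrightarrow> Item M g [] j l \<in> B \<Longrightarrow> l < k \<Longrightarrow> Item N (a@[M]) b i l \<in> B"
    and h4: "\<And>N a X b i j c. Item N a (X#b) i j \<in> B \<Longrightarrow> j < k \<Longrightarrow> (X,c) \<in> F j \<Longrightarrow> Item N (a@[X]) b i (j + length c) \<in> B"
    and h5: "F k \<subseteq> T"
  shows "Vi R S F k N a b i j \<Longrightarrow> Item N a b i j \<in> pi R k T B"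
proof (induction rule: Vi.induct)
  case (vinit a) then show ?case by (rule h1)
next
  case (vpred N a M b i j g)
  show ?case
  proof (cases "j < k")
    case True
    then have "Item N a (M#b) i j \<in> B" using pi_low[OF vpred.IH] by simp
    then show ?thesis using h2[OF _ True vpred.hyps(3)] pi_base by blast
  next
    case False then have "j = k" using vpred.hyps by simp
    then show ?thesis using pi_pred[OF _ vpred.hyps(3)] vpred.IH by simp
  qed
next
  case (vcomp N a M b i j g l)
  show ?case
  proof (cases "l < k")
    case True
    have "j \<le> l" using Vi_le[OF vcomp.hyps(2)] .
    then have "Item N a (M#b) i j \<in> B" "Item M g [] j l \<in> B" using pi_low vcomp.IH True by fastforce+
    then show ?thesis using h3 True pi_base by blast
  next
    case False then have "l = k" using vcomp.hyps by simp
    then show ?thesis using pi_comp vcomp.IH by simp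
  qed
next
  case (vscan N a X b i j c)
  show ?case
  proof (cases "j < k")
    case True
    then have "Item N a (X#b) i j \<in> B" using pi_low[OF vscan.IH] by simp
    then show ?thesis using h4[OF _ True vscan.hyps(3)] pi_base by blast
  next
    case False then have "j = k" using vscan.hyps by simp
    then show ?thesis using pi_scan[OF _ subsetD[OF h5]] vscan.IH vscan.hyps(3) by simp
  qed
qed

lemma pi_sub_V: assumes B: "B \<subseteq> Vs R S F k" and T: "T \<subseteq> F k" shows "pi R k T B \<subseteq> Vs R S F k"
proof (rule pi_least[OF B])
  show "Predict R k (Vs R S F k) \<subseteq> Vs R S F k"
  proof
    fix x assume "x \<in> Predict R k (Vs R S F k)"
    then show "x \<in> Vs R S F k" unfolding Predict_def using Vi.vpred[of R S F k] by auto
  qed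
  show "Complete k (Vs R S F k) \<subseteq> Vs R S F k"
  proof
    fix x assume "x \<in> Complete k (Vs R S F k)"
    then show "x \<in> Vs R S F k" unfolding Complete_def using Vi.vcomp[of R S F k] by auto
  qed
  show "Scan T k (Vs R S F k) \<subseteq> Vs R S F k"
  proof
    fix x assume "x \<in> Scan T k (Vs R S F k)"
    then show "x \<in> Vs R S F k" unfolding Scan_def using Vi.vscan[of R S F k] T by auto
  qed
qed

lemma VS_step: assumes "F k \<subseteq> Z'"
  shows "pi R k Z' (Vs R S F k) = Vs R S (F(k := Z')) k"
proof
  have le: "F x \<subseteq> (F(k := Z')) x" for x using assms by auto
  show "pi R k Z' (Vs R S F k) \<subseteq> Vs R S (F(k := Z')) k"
    by (rule pi_sub_V) (auto elim!: Vs_cases intro: Vi_mono[OF _ le])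
  show "Vs R S (F(k := Z')) k \<subseteq> pi R k Z' (Vs R S F k)"
  proof
    fix x assume "x \<in> Vs R S (F(k := Z')) k"
    then show "x \<in> pi R k Z' (Vs R S F k)"
    proof (rule Vs_cases)
      fix N a b i j assume x: "x = Item N a b i j" and v: "Vi R S (F(k := Z')) k N a b i j"
      have "Item N a b i j \<in> pi R k Z' (Vs R S F k)"
      proof (rule V_sub_pi[OF _ _ _ _ _ v])
        show "Item S [] a 0 0 \<in> pi R k Z' (Vs R S F k)" if "(S, a) \<in> R" for a
          using pi_base Vi.vinit[OF that] by fastforce
        show "Item M [] g j j \<in> Vs R S F k" if "Item N a (M # b) i j \<in> Vs R S F k" "j < k" "(M, g) \<in> R"
          for N a M b i j g using that Vi.vpred by fastforce
        show "Item N (a @ [M]) b i l \<in> Vs R S F k" if "Item N a (M # b) i j \<in> Vs R S F k"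
          "Item M g [] j l \<in> Vs R S F k" "l < k" for N a M b i j g l using that Vi.vcomp by fastforce
        show "Item N (a @ [X]) b i (j + length c) \<in> Vs R S F k" if "Item N a (X # b) i j \<in> Vs R S F k"
          "j < k" "(X, c) \<in> (F(k := Z')) j" for N a X b i j c using that Vi.vscan by fastforce
      qed simp
      then show ?thesis using x by simp
    qed
  qed
qed

lemma V_start0: "pi R 0 ({} :: ('a \<times> 'c list) set) (Init R S) = Vs R S (\<lambda>_. {} :: ('a \<times> 'c list) set) 0"
proof
  show "pi R 0 ({} :: ('a \<times> 'c list) set) (Init R S) \<subseteq> Vs R S (\<lambda>_. {} :: ('a \<times> 'c list) set) 0"
    by (rule pi_sub_V) (auto simp: Init_def intro: Vi.vinit)
  show "Vs R S (\<lambda>_. {} :: ('a \<times> 'c list) set) 0 \<subseteq> pi R 0 ({} :: ('a \<times> 'c list) set) (Init R S)"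
  proof
    fix x assume "x \<in> Vs R S (\<lambda>_. {} :: ('a \<times> 'c list) set) 0"
    then show "x \<in> pi R 0 ({} :: ('a \<times> 'c list) set) (Init R S)"
    proof (rule Vs_cases)
      fix N a b i j assume x: "x = Item N a b i j" and v: "Vi R S (\<lambda>_. {} :: ('a \<times> 'c list) set) 0 N a b i j"
      have "Item N a b i j \<in> pi R 0 ({} :: ('a \<times> 'c list) set) (Init R S)"
        by (rule V_sub_pi[OF _ _ _ _ _ v]) (auto simp: Init_def intro: subsetD[OF pi_base])
      then show ?thesis using x by simp
    qed
  qed
qed

lemma V_startS:
  fixes F :: "nat \<Rightarrow> ('a \<times> 'c list) set"
  assumes chain: "\<And>u j. G u j \<subseteq> G (Suc u) j" and F_eq: "\<And>j. j \<le> k \<Longrightarrow> F j = (\<Union>u. G u j)"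
    and G_le: "\<And>u j. G u j \<subseteq> F j" and Fk: "F (Suc k) = {}"
  shows "pi R (Suc k) ({} :: ('a \<times> 'c list) set) (\<Union>u. Vs R S (G u) k) = Vs R S F (Suc k)"
proof
  have mono: "u \<le> v \<Longrightarrow> G u j \<subseteq> G v j" for u v j
    using lift_Suc_mono_le[of "\<lambda>u. G u j"] chain by blast
  have VG: "Vi R S (G u) k N a b i j \<Longrightarrow> u \<le> v \<Longrightarrow> Vi R S (G v) k N a b i j" for u v N a b i j
    using Vi_mono[of R S "G u" k N a b i j "G v" k] mono by blast
  show "pi R (Suc k) ({} :: ('a \<times> 'c list) set) (\<Union>u. Vs R S (G u) k) \<subseteq> Vs R S F (Suc k)"
  proof (rule pi_sub_V)
    show "(\<Union>u. Vs R S (G u) k) \<subseteq> Vs R S F (Suc k)"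
    proof
      fix x assume "x \<in> (\<Union>u. Vs R S (G u) k)"
      then obtain u where "x \<in> Vs R S (G u) k" by blast
      then show "x \<in> Vs R S F (Suc k)"
        by (rule Vs_cases) (use Vi_mono[OF _ G_le] in auto)
    qed
  qed simp
  show "Vs R S F (Suc k) \<subseteq> pi R (Suc k) ({} :: ('a \<times> 'c list) set) (\<Union>u. Vs R S (G u) k)"
  proof
    fix x assume "x \<in> Vs R S F (Suc k)"
    then show "x \<in> pi R (Suc k) ({} :: ('a \<times> 'c list) set) (\<Union>u. Vs R S (G u) k)"
    proof (rule Vs_cases)
      fix N a b i j assume x: "x = Item N a b i j" and v: "Vi R S F (Suc k) N a b i j"
      have "Item N a b i j \<in> pi R (Suc k) ({} :: ('a \<times> 'c list) set) (\<Union>u. Vs R S (G u) k)"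
      proof (rule V_sub_pi[OF _ _ _ _ _ v])
        show "Item S [] a 0 0 \<in> pi R (Suc k) ({} :: ('a \<times> 'c list) set) (\<Union>u. Vs R S (G u) k)" if "(S, a) \<in> R" for a
          using pi_base Vi.vinit[OF that, of "G 0" k] by fastforce
        show "Item M [] g j j \<in> (\<Union>u. Vs R S (G u) k)" if "Item N a (M # b) i j \<in> (\<Union>u. Vs R S (G u) k)"
          "j < Suc k" "(M, g) \<in> R" for N a M b i j g
        proof -
          from that(1) obtain u where "Vi R S (G u) k N a (M # b) i j" by auto
          from Vi.vpred[OF this _ that(3)] that(2) have "Vi R S (G u) k M [] g j j" by simp
          then show ?thesis by auto
        qed
        show "Item N (a @ [M]) b i l \<in> (\<Union>u. Vs R S (G u) k)" if "Item N a (M # b) i j \<in> (\<Union>u. Vs R S (G u) k)"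
          "Item M g [] j l \<in> (\<Union>u. Vs R S (G u) k)" "l < Suc k" for N a M b i j g l
        proof -
          from that(1) obtain u1 where u1: "Vi R S (G u1) k N a (M # b) i j" by auto
          from that(2) obtain u2 where u2: "Vi R S (G u2) k M g [] j l" by auto
          have "Vi R S (G (max u1 u2)) k N (a @ [M]) b i l"
            using Vi.vcomp[OF VG[OF u1] VG[OF u2]] that(3) by simp
          then show ?thesis by auto
        qed
        show "Item N (a @ [X]) b i (j + length c) \<in> (\<Union>u. Vs R S (G u) k)"
          if "Item N a (X # b) i j \<in> (\<Union>u. Vs R S (G u) k)" "j < Suc k" "(X, c) \<in> F j" for N a X b i j c
        proof -
          from that(1) obtain u1 where u1: "Vi R S (G u1) k N a (X # b) i j" by auto
          from that(3) F_eq[of j] that(2) obtain u2 where u2: "(X, c) \<in> G u2 j" by auto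
          have "(X, c) \<in> G (max u1 u2) j" using mono[of u2 "max u1 u2"] u2 by auto
          then have "Vi R S (G (max u1 u2)) k N (a @ [X]) b i (j + length c)"
            using Vi.vscan[OF VG[OF u1]] that(2) by simp
          then show ?thesis by auto
        qed
        show "F (Suc k) \<subseteq> {}" using Fk by simp
      qed
      then show ?thesis using x by simp
    qed
  qed
qed




lemma Append_mem: "p \<in> P \<Longrightarrow> length (chars_of p) = k \<Longrightarrow> t \<in> T \<Longrightarrow> terms_of (p@[t]) \<in> L \<Longrightarrow> p@[t] \<in> Append L k T P"
  unfolding Append_def by (intro UnI2 CollectI exI conjI) (rule refl | assumption)+

lemma Append_cases: "x \<in> Append L k T P \<Longrightarrow> x \<in> P \<or> (\<exists>p t. x = p@[t] \<and> p \<in> P \<and> length (chars_of p) = k \<and> t \<in> T \<and> terms_of (p@[t]) \<in> L)"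
  unfolding Append_def
  apply (erule UnE)
   apply (erule disjI1)
  apply (rule disjI2)
  apply (erule CollectE)
  apply assumption
  done

locale LL =
  fixes NN TT :: "'a set" and R :: "('a \<times> 'a list) set" and S :: 'a
    and Lex :: "'a \<Rightarrow> 'c list \<Rightarrow> nat \<Rightarrow> ('a \<times> 'c list) set"
    and Sel :: "('a \<times> 'c list) set \<Rightarrow> ('a \<times> 'c list) set \<Rightarrow> ('a \<times> 'c list) set"
    and D :: "'c list"
  assumes cfg: "is_cfg NN TT R S" and lexing: "is_local_lexing TT Lex Sel"
begin

abbreviation "Lp \<equiv> Lprefix NN TT R S"

lemma sel: "A \<subseteq> B \<Longrightarrow> A \<subseteq> Sel A B \<and> Sel A B \<subseteq> B"
  using lexing unfolding is_local_lexing_def by blast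

lemma lex_fst: "t \<in> TT \<Longrightarrow> k \<le> length D \<Longrightarrow> x \<in> Lex t D k \<Longrightarrow> fst x = t"
  using lexing unfolding is_local_lexing_def by blast

lemma derives_lists: "derives R [S] b \<Longrightarrow> b \<in> lists (NN \<union> TT)"
  unfolding derives_def
proof (induction rule: rtranclp_induct)
  case base then show ?case using cfg unfolding is_cfg_def by simp
next
  case (step b c)
  then obtain b0 N b1 g where b: "b = b0 @ [N] @ b1" "c = b0 @ g @ b1" "(N, g) \<in> R"
    unfolding derives1_def by blast
  have "g \<in> lists (NN \<union> TT)" using cfg b(3) unfolding is_cfg_def by blast
  then show ?case using step.IH b by auto
qed

lemma Lp_nil: "[] \<in> Lp"
  unfolding Lprefix_def using cfg derives_refl[of R "[S]"] unfolding is_cfg_def by auto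

lemma Lp_prefix: "w @ v \<in> Lp \<Longrightarrow> w \<in> Lp"
proof -
  assume "w @ v \<in> Lp"
  then obtain \<alpha> where h: "w @ v \<in> lists TT" "\<alpha> \<in> lists (NN \<union> TT)" "derives R [S] (w @ v @ \<alpha>)"
    unfolding Lprefix_def by auto
  then have "v @ \<alpha> \<in> lists (NN \<union> TT)" by auto
  moreover have "w \<in> lists TT" using h(1) by simp
  ultimately show ?thesis using h(3) unfolding Lprefix_def by (intro CollectI conjI bexI[of _ "v @ \<alpha>"]) auto
qed

definition charset :: "(nat \<Rightarrow> ('a \<times> 'c list) set) \<Rightarrow> ('a \<times> 'c list) list set" where
  "charset F = {p. terms_of p \<in> Lp \<and> admo F 0 p}"

lemma admo_empty: "admo (\<lambda>_. {}) j p \<longleftrightarrow> p = []"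
  by (cases p) auto

lemma charset_empty: "charset (\<lambda>_. {}) = {[]}"
  unfolding charset_def using Lp_nil by (auto simp: admo_empty terms_of_def)

lemma charset_Union:
  assumes "\<And>i. F i = (\<Union>u. G u i)" "\<And>u i. G u i \<subseteq> G (Suc u) i"
  shows "charset F = (\<Union>u. charset (G u))"
proof
  show "charset F \<subseteq> (\<Union>u. charset (G u))"
  proof
    fix p assume "p \<in> charset F"
    then have "terms_of p \<in> Lp" "admo F 0 p" by (simp_all add: charset_def)
    then obtain u where "admo (G u) 0 p" using admo_chain[of F G, OF assms(1) assms(2)] by blast
    then show "p \<in> (\<Union>u. charset (G u))" using \<open>terms_of p \<in> Lp\<close> by (auto simp: charset_def)
  qed
  show "(\<Union>u. charset (G u)) \<subseteq> charset F"
  proof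
    fix p assume "p \<in> (\<Union>u. charset (G u))"
    then obtain u where "terms_of p \<in> Lp" "admo (G u) 0 p" unfolding charset_def by blast
    moreover have "G u i \<subseteq> F i" for i using assms(1) by auto
    ultimately show "p \<in> charset F" unfolding charset_def using admo_mono[of "G u" 0 p F] by blast
  qed
qed

lemma LA:
  assumes high: "\<And>j. k < j \<Longrightarrow> F j = {}" and Fk: "F k \<subseteq> Z'"
  shows "limit (Append Lp k Z') (charset F) = charset (F(k := Z'))"
proof
  let ?G = "F(k := Z')"
  let ?f = "Append Lp k Z'"
  have le: "F i \<subseteq> ?G i" for i using Fk by auto
  have "(?f ^^ n) (charset F) \<subseteq> charset ?G" for n
  proof (induction n)
    case 0
    show ?case
    proof
      fix p assume "p \<in> (?f ^^ 0) (charset F)"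
      then have "terms_of p \<in> Lp" "admo F 0 p" by (simp_all add: charset_def)
      then show "p \<in> charset ?G" using admo_mono[of F 0 p ?G] le by (simp add: charset_def)
    qed
  next
    case (Suc n)
    show ?case
    proof
      fix p assume "p \<in> (?f ^^ Suc n) (charset F)"
      then have "p \<in> ?f ((?f ^^ n) (charset F))" by (simp only: funpow_Suc')
      from Append_cases[OF this] have "p \<in> (?f ^^ n) (charset F) \<or> (\<exists>p' t. p = p' @ [t] \<and> p' \<in> (?f ^^ n) (charset F) \<and> clen p' = k \<and> t \<in> Z' \<and> terms_of (p' @ [t]) \<in> Lp)"
        unfolding clen_def .
      then show "p \<in> charset ?G"
      proof (elim disjE exE conjE)
        assume "p \<in> (?f ^^ n) (charset F)" then show ?thesis using Suc by blast
      next
        fix p' t assume h: "p = p' @ [t]" "p' \<in> (?f ^^ n) (charset F)" "clen p' = k" "t \<in> Z'" "terms_of (p' @ [t]) \<in> Lp"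
        then have "admo ?G 0 p'" using Suc unfolding charset_def by blast
        then show ?thesis using h unfolding charset_def by simp
      qed
    qed
  qed
  then show "limit ?f (charset F) \<subseteq> charset ?G" unfolding limit_def by blast
  show "charset ?G \<subseteq> limit ?f (charset F)"
  proof
    fix p assume "p \<in> charset ?G"
    then have "\<exists>n. p \<in> (?f ^^ n) (charset F)"
    proof (induction p rule: rev_induct)
      case Nil then show ?case using Lp_nil unfolding charset_def by (auto intro: exI[of _ 0] simp: terms_of_def)
    next
      case (snoc t p)
      have tp: "terms_of p \<in> Lp" using snoc.prems Lp_prefix unfolding charset_def terms_of_def by auto
      have ap: "admo ?G 0 p" and tG: "t \<in> ?G (clen p)" using snoc.prems unfolding charset_def by auto
      from snoc.IH tp ap obtain n where n: "p \<in> (?f ^^ n) (charset F)" unfolding charset_def by blast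
      show ?case
      proof (cases "clen p = k")
        case True
        have tZ: "t \<in> Z'" using tG True by simp
        have lp: "length (chars_of p) = k" using True by (simp add: clen_def)
        have tl: "terms_of (p @ [t]) \<in> Lp" using snoc.prems by (simp add: charset_def)
        have "p @ [t] \<in> ?f ((?f ^^ n) (charset F))"
          by (rule Append_mem[OF n lp tZ tl])
        then have "p @ [t] \<in> (?f ^^ Suc n) (charset F)" by (simp only: funpow_Suc')
        then show ?thesis by blast
      next
        case False
        then have tF: "t \<in> F (clen p)" using tG by simp
        then have "clen p < k" using high False by (metis empty_iff linorder_neqE_nat)
        then have "admo F 0 p" by (intro admo_restrict[OF ap]) auto
        then have "p @ [t] \<in> charset F" using tF snoc.prems unfolding charset_def by simp
        then have "p @ [t] \<in> (?f ^^ 0) (charset F)" by simp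
        then show ?thesis by blast
      qed
    qed
    then show "p \<in> limit ?f (charset F)" unfolding limit_def by blast
  qed
qed

end




context LL begin

definition Zs :: "nat \<Rightarrow> nat \<Rightarrow> ('a \<times> 'c list) set" where
  "Zs k u = snd (PZ TT Lex Sel D Lp k (Pstart TT Lex Sel D Lp k) u)"
definition Ps :: "nat \<Rightarrow> nat \<Rightarrow> ('a \<times> 'c list) list set" where
  "Ps k u = fst (PZ TT Lex Sel D Lp k (Pstart TT Lex Sel D Lp k) u)"
definition Zinf :: "nat \<Rightarrow> ('a \<times> 'c list) set" where
  "Zinf k = (\<Union>u. Zs k u)"
definition Fam :: "nat \<Rightarrow> nat \<Rightarrow> nat \<Rightarrow> ('a \<times> 'c list) set" where
  "Fam k u j = (if j < k then Zinf j else if j = k then Zs k u else {})"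

lemma Zs_0: "Zs k 0 = {}" by (simp add: Zs_def)
lemma Ps_0: "Ps k 0 = Pstart TT Lex Sel D Lp k" by (simp add: Ps_def)
lemma Zs_Suc: "Zs k (Suc u) = Sel (Zs k u) (Wk TT Lex D Lp k (Ps k u))"
  by (simp add: Zs_def Ps_def Let_def)
lemma Ps_Suc: "Ps k (Suc u) = limit (Append Lp k (Zs k (Suc u))) (Ps k u)"
  by (simp add: Zs_def Ps_def Let_def)

lemma limit_base: "X \<subseteq> limit f X"
  unfolding limit_def by (metis UN_upper UNIV_I funpow_0)

lemma Ps_mono: "Ps k u \<subseteq> Ps k (Suc u)"
  using limit_base by (simp add: Ps_Suc)

lemma Wk_mono: "P \<subseteq> P' \<Longrightarrow> Wk TT Lex D L k P \<subseteq> Wk TT Lex D L k P'"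
  unfolding Wk_def by blast

lemma Zs_W: "Zs k u \<subseteq> Wk TT Lex D Lp k (Ps k u) \<and> Zs k u \<subseteq> Zs k (Suc u)"
proof (induction u)
  case 0 then show ?case by (simp add: Zs_0)
next
  case (Suc u)
  have a: "Zs k (Suc u) \<subseteq> Wk TT Lex D Lp k (Ps k u)" using sel[OF Suc[THEN conjunct1]] by (simp add: Zs_Suc)
  have b: "Zs k (Suc u) \<subseteq> Wk TT Lex D Lp k (Ps k (Suc u))" using a Wk_mono[OF Ps_mono] by blast
  have "Zs k (Suc u) \<subseteq> Zs k (Suc (Suc u))" using sel[OF b] Zs_Suc[of k "Suc u"] by simp
  then show ?case using b by blast
qed

lemma Zs_mono: "u \<le> v \<Longrightarrow> Zs k u \<subseteq> Zs k v"
  using lift_Suc_mono_le[of "Zs k"] Zs_W by blast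

lemma Zs_wf: "x \<in> Zs k u \<Longrightarrow> fst x \<in> TT \<and> x \<in> Lex (fst x) D k"
  using Zs_W[of k u] unfolding Wk_def Xk_def by blast

lemma Fam_wf: "t \<in> Fam k u j \<Longrightarrow> fst t \<in> TT"
proof -
  assume "t \<in> Fam k u j"
  then have "\<exists>k' u'. t \<in> Zs k' u'" unfolding Fam_def Zinf_def by (auto split: if_splits)
  then show ?thesis using Zs_wf by blast
qed

lemma Fam_mono: "Fam k u j \<subseteq> Fam k (Suc u) j"
  unfolding Fam_def using Zs_W by auto

lemma Fam_mono_le: "u \<le> v \<Longrightarrow> Fam k u j \<subseteq> Fam k v j"
  using lift_Suc_mono_le[of "\<lambda>u. Fam k u j"] Fam_mono by blast

lemma Fam_Suc: "Fam k (Suc u) = (Fam k u)(k := Zs k (Suc u))"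
  by (rule ext) (simp add: Fam_def)

lemma Fam_zero: "Fam (Suc k) 0 j = (\<Union>u. Fam k u j)"
  by (cases "j < k"; cases "j = k") (auto simp: Fam_def Zinf_def Zs_0)

lemma Fam_00: "Fam 0 0 = (\<lambda>_. {})"
  by (rule ext) (simp add: Fam_def Zs_0)

lemma Fam_high: "k < j \<Longrightarrow> Fam k u j = {}"
  by (simp add: Fam_def)

lemma Fam_le: "Fam k u j \<subseteq> Fam (Suc k) 0 j"
  using Fam_zero by blast

lemma Ps_u: "Ps k 0 = charset (Fam k 0) \<Longrightarrow> Ps k u = charset (Fam k u)"
proof (induction u)
  case 0 then show ?case by simp
next
  case (Suc u)
  have "Ps k (Suc u) = limit (Append Lp k (Zs k (Suc u))) (charset (Fam k u))"
    using Suc by (simp add: Ps_Suc)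
  also have "\<dots> = charset ((Fam k u)(k := Zs k (Suc u)))"
    by (rule LA) (auto simp: Fam_def Zs_W)
  finally show ?case by (simp only: Fam_Suc)
qed

lemma Ps_zero: "Ps k 0 = charset (Fam k 0)"
proof (induction k)
  case 0 then show ?case by (simp add: Ps_0 Fam_00 charset_empty)
next
  case (Suc k)
  have "Ps (Suc k) 0 = (\<Union>u. Ps k u)" by (simp add: Ps_0 Pinf_def Ps_def)
  also have "\<dots> = (\<Union>u. charset (Fam k u))" using Ps_u[OF Suc] by simp
  also have "\<dots> = charset (Fam (Suc k) 0)"
    by (rule charset_Union[symmetric]) (simp_all add: Fam_zero Fam_mono)
  finally show ?case .
qed

lemma Ps_char: "Ps k u = charset (Fam k u)"
  using Ps_u[OF Ps_zero] .

end




context LL begin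

definition Js :: "nat \<Rightarrow> nat \<Rightarrow> 'a item set" where
  "Js k u = fst (JT R TT Lex Sel D k (Jstart R S TT Lex Sel D k) u)"
definition Ts :: "nat \<Rightarrow> nat \<Rightarrow> ('a \<times> 'c list) set" where
  "Ts k u = snd (JT R TT Lex Sel D k (Jstart R S TT Lex Sel D k) u)"

lemma Js_0: "Js k 0 = Jstart R S TT Lex Sel D k" by (simp add: Js_def)
lemma Ts_0: "Ts k 0 = {}" by (simp add: Ts_def)
lemma Ts_Suc: "Ts k (Suc u) = Tokens TT Lex Sel D (Ts k u) k (Js k u)"
  by (simp add: Ts_def Js_def Let_def)
lemma Js_Suc: "Js k (Suc u) = pi R k (Ts k (Suc u)) (Js k u)"
  by (simp add: Ts_def Js_def Let_def)

lemma CW1: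
  assumes k: "k \<le> length D" and wf: "\<And>j t. t \<in> F j \<Longrightarrow> fst t \<in> TT"
  shows "x \<in> {x. \<exists>X N \<alpha> \<beta> i. X \<in> TT \<and> Item N \<alpha> (X # \<beta>) i k \<in> Vs R S F k \<and> x \<in> Lex X D k} \<Longrightarrow> x \<in> Wk TT Lex D Lp k (charset F)"
proof -
  assume "x \<in> {x. \<exists>X N \<alpha> \<beta> i. X \<in> TT \<and> Item N \<alpha> (X # \<beta>) i k \<in> Vs R S F k \<and> x \<in> Lex X D k}"
  then have "\<exists>X N \<alpha> \<beta> i. X \<in> TT \<and> Vi R S F k N \<alpha> (X#\<beta>) i k \<and> x \<in> Lex X D k" by simp
  then obtain X N \<alpha> \<beta> i where X: "X \<in> TT" and it: "Vi R S F k N \<alpha> (X#\<beta>) i k" and lx: "x \<in> Lex X D k"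
    by blast
  have fx: "fst x = X" using lex_fst[OF X k lx] .
  from vi_sound[OF it] obtain p1 p2 \<delta> where r: "(N, \<alpha> @ X # \<beta>) \<in> R" and h: "admo F 0 (p1@p2)"
    "clen p1 + clen p2 = k" "derives R [S] (map fst p1 @ N # \<delta>)" "Der R \<alpha> (map fst p2)" by blast
  have s1: "derives R (map fst p1 @ N # \<delta>) (map fst p1 @ \<alpha> @ ((X # \<beta>) @ \<delta>))"
    using derives_step[OF r, of "map fst p1" \<delta>] by simp
  have s2: "derives R (map fst p1 @ \<alpha> @ ((X # \<beta>) @ \<delta>)) (map fst p1 @ map fst p2 @ ((X # \<beta>) @ \<delta>))"
    by (rule derives_cong[OF Der_derives[OF h(4)]])
  have "derives R [S] (map fst p1 @ map fst p2 @ ((X # \<beta>) @ \<delta>))"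
    by (rule derives_trans[OF h(3) derives_trans[OF s1 s2]])
  then have d: "derives R [S] (map fst (p1 @ p2) @ X # (\<beta> @ \<delta>))" by simp
  have "map fst (p1 @ p2) @ X # (\<beta> @ \<delta>) \<in> lists (NN \<union> TT)" by (rule derives_lists[OF d])
  then have bl: "\<beta> @ \<delta> \<in> lists (NN \<union> TT)" by simp
  have pl: "map fst (p1 @ p2) \<in> lists TT" by (rule admo_wf[OF h(1) wf])
  have "map fst (p1 @ p2) @ [X] \<in> Lp"
    unfolding Lprefix_def using pl X bl d by (intro CollectI conjI bexI[of _ "\<beta> @ \<delta>"]) auto
  then have tl: "terms_of ((p1 @ p2) @ [x]) \<in> Lp" using fx by (simp add: terms_of_def)
  then have "terms_of (p1 @ p2) \<in> Lp" using Lp_prefix by (simp add: terms_of_def)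
  then have pc: "p1 @ p2 \<in> charset F" using h(1) by (simp add: charset_def)
  have xX: "x \<in> Xk TT Lex D k" using X lx fx by (simp add: Xk_def)
  have "length (chars_of (p1 @ p2)) = k" using h(2) by (simp add: clen_def[symmetric])
  then have "\<exists>p\<in>charset F. length (chars_of p) = k \<and> terms_of (p @ [x]) \<in> Lp" using pc tl by blast
  then show "x \<in> Wk TT Lex D Lp k (charset F)"
    unfolding Wk_def using xX by blast
qed

lemma CW2:
  assumes k: "k \<le> length D" and wf: "\<And>j t. t \<in> F j \<Longrightarrow> fst t \<in> TT"
  shows "x \<in> Wk TT Lex D Lp k (charset F) \<Longrightarrow> x \<in> {x. \<exists>X N \<alpha> \<beta> i. X \<in> TT \<and> Item N \<alpha> (X # \<beta>) i k \<in> Vs R S F k \<and> x \<in> Lex X D k}"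
proof -
  assume "x \<in> Wk TT Lex D Lp k (charset F)"
  then obtain p where xX: "x \<in> Xk TT Lex D k" and pc: "p \<in> charset F" and pl: "length (chars_of p) = k"
    and tl: "terms_of (p @ [x]) \<in> Lp" unfolding Wk_def by blast
  have fx: "fst x \<in> TT" and lx: "x \<in> Lex (fst x) D k" using xX by (simp_all add: Xk_def)
  have "\<exists>\<gamma> \<in> lists (NN \<union> TT). derives R [S] (terms_of (p @ [x]) @ \<gamma>)"
    using tl unfolding Lprefix_def by blast
  then obtain \<gamma> where "derives R [S] (terms_of (p @ [x]) @ \<gamma>)" by blast
  then have d: "derives R [S] (map fst p @ fst x # \<gamma>)" by (simp add: terms_of_def)
  have Dd: "Der R [S] (map fst p @ fst x # \<gamma>)" by (rule derives_Der[OF d])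
  from Der_Cons_inv[OF Dd] have "\<exists>g. (S, g) \<in> R \<and> Der R g (map fst p @ fst x # \<gamma>)"
  proof (elim disjE exE conjE)
    fix w' assume e: "map fst p @ fst x # \<gamma> = S # w'" and "Der R [] w'"
    then have "w' = []" using Der_nil_inv by blast
    then have "fst x = S" using e by (cases p) auto
    moreover have "S \<in> NN" "NN \<inter> TT = {}" using cfg unfolding is_cfg_def by blast+
    ultimately show ?thesis using fx by blast
  next
    fix g u w' assume h: "(S, g) \<in> R" "Der R g u" "Der R [] w'" "map fst p @ fst x # \<gamma> = u @ w'"
    then have "w' = []" using Der_nil_inv by blast
    then show ?thesis using h by auto
  qed
  then obtain g where r: "(S, g) \<in> R" and Dg: "Der R g (map fst p @ fst x # \<gamma>)" by blast
  have init: "Vi R S F k S [] (g @ []) 0 0" using Vi.vinit[OF r] by simp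
  have ap: "admo F 0 p" using pc by (simp add: charset_def)
  have cl: "0 + clen p \<le> k" using pl by (simp add: clen_def)
  from vi_H[OF Dg refl init ap cl] obtain N' a' c' i' where "Vi R S F k N' a' (fst x # c') i' (0 + clen p)" by blast
  then have "Item N' a' (fst x # c') i' k \<in> Vs R S F k" using pl by (simp add: clen_def)
  then have "\<exists>X N \<alpha> \<beta> i. X \<in> TT \<and> Item N \<alpha> (X # \<beta>) i k \<in> Vs R S F k \<and> x \<in> Lex X D k"
    using fx lx by blast
  then show "x \<in> {x. \<exists>X N \<alpha> \<beta> i. X \<in> TT \<and> Item N \<alpha> (X # \<beta>) i k \<in> Vs R S F k \<and> x \<in> Lex X D k}"
    by (simp only: mem_Collect_eq)
qed

lemma CW:
  assumes k: "k \<le> length D" and wf: "\<And>j t. t \<in> F j \<Longrightarrow> fst t \<in> TT"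
  shows "{x. \<exists>X N \<alpha> \<beta> i. X \<in> TT \<and> Item N \<alpha> (X # \<beta>) i k \<in> Vs R S F k \<and> x \<in> Lex X D k}
         = Wk TT Lex D Lp k (charset F)"
  apply (rule set_eqI)
  apply (rule iffI)
   apply (erule CW1[rotated 2])
    apply (rule k)
   apply (erule wf)
  apply (erule CW2[rotated 2])
   apply (rule k)
  apply (erule wf)
  done

lemma Js_u: "k \<le> length D \<Longrightarrow> Js k 0 = Vs R S (Fam k 0) k \<Longrightarrow> Js k u = Vs R S (Fam k u) k \<and> Ts k u = Zs k u"
proof (induction u)
  case 0 then show ?case by (simp add: Ts_0 Zs_0)
next
  case (Suc u)
  have "Ts k (Suc u) = Sel (Zs k u) {x. \<exists>X N \<alpha> \<beta> i. X \<in> TT \<and> Item N \<alpha> (X # \<beta>) i k \<in> Vs R S (Fam k u) k \<and> x \<in> Lex X D k}"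
    using Suc by (simp add: Ts_Suc Tokens_def)
  also have "\<dots> = Sel (Zs k u) (Wk TT Lex D Lp k (charset (Fam k u)))"
    using CW[OF Suc.prems(1) Fam_wf] by simp
  also have "\<dots> = Zs k (Suc u)" by (simp add: Zs_Suc Ps_char)
  finally have T: "Ts k (Suc u) = Zs k (Suc u)" .
  have "Js k (Suc u) = pi R k (Zs k (Suc u)) (Vs R S (Fam k u) k)"
    using Suc T by (simp add: Js_Suc)
  also have "\<dots> = Vs R S ((Fam k u)(k := Zs k (Suc u))) k"
    by (rule VS_step) (simp add: Fam_def Zs_W)
  also have "\<dots> = Vs R S (Fam k (Suc u)) k" by (simp only: Fam_Suc)
  finally show ?case using T by simp
qed

lemma Js_zero: "k \<le> length D \<Longrightarrow> Js k 0 = Vs R S (Fam k 0) k"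
proof (induction k)
  case 0
  have "Js 0 0 = pi R 0 ({} :: ('a \<times> 'c list) set) (Init R S)" by (simp add: Js_0)
  also have "\<dots> = Vs R S (\<lambda>_. {} :: ('a \<times> 'c list) set) 0" by (rule V_start0)
  finally show ?case by (simp add: Fam_00)
next
  case (Suc k)
  then have kD: "k \<le> length D" by simp
  have "Js (Suc k) 0 = pi R (Suc k) ({} :: ('a \<times> 'c list) set) (\<Union>u. Js k u)"
    by (simp add: Js_0 Ik_def Js_def)
  also have "\<dots> = pi R (Suc k) ({} :: ('a \<times> 'c list) set) (\<Union>u. Vs R S (Fam k u) k)"
    using Js_u[OF kD Suc.IH[OF kD]] by simp
  also have "\<dots> = Vs R S (Fam (Suc k) 0) (Suc k)"
  proof (rule V_startS)
    show "Fam k u j \<subseteq> Fam k (Suc u) j" for u j by (rule Fam_mono)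
    show "Fam (Suc k) 0 j = (\<Union>u. Fam k u j)" for j by (rule Fam_zero)
    show "Fam k u j \<subseteq> Fam (Suc k) 0 j" for u j by (rule Fam_le)
    show "Fam (Suc k) 0 (Suc k) = {}" by (simp add: Fam_def Zs_0)
  qed
  finally show ?case .
qed

lemma final_F:
  assumes wf: "\<And>j t. t \<in> F j \<Longrightarrow> fst t \<in> TT"
  shows "(\<exists>p. p \<in> charset F \<and> clen p = n \<and> terms_of p \<in> Lang NN TT R S) \<longleftrightarrow> (\<exists>\<alpha>. Vi R S F n S \<alpha> [] 0 n)"
proof
  assume "\<exists>p. p \<in> charset F \<and> clen p = n \<and> terms_of p \<in> Lang NN TT R S"
  then obtain p where pc: "p \<in> charset F" and pl: "clen p = n" and pL: "terms_of p \<in> Lang NN TT R S" by blast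
  have tl: "map fst p \<in> lists TT" and d: "derives R [S] (map fst p)"
    using pL by (simp_all add: Lang_def terms_of_def)
  have Dd: "Der R [S] (map fst p)" by (rule derives_Der[OF d])
  from Der_Cons_inv[OF Dd] have "\<exists>g. (S, g) \<in> R \<and> Der R g (map fst p)"
  proof (elim disjE exE conjE)
    fix w' assume e: "map fst p = S # w'" and "Der R [] w'"
    then have "S \<in> TT" using tl by auto
    then show ?thesis using cfg unfolding is_cfg_def by auto
  next
    fix g u w' assume h: "(S, g) \<in> R" "Der R g u" "Der R [] w'" "map fst p = u @ w'"
    then have "w' = []" using Der_nil_inv by blast
    then show ?thesis using h by auto
  qed
  then obtain g where r: "(S, g) \<in> R" and Dg: "Der R g (map fst p)" by blast
  have init: "Vi R S F n S [] (g @ []) 0 0" using Vi.vinit[OF r] by simp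
  have ap: "admo F 0 p" using pc by (simp add: charset_def)
  have "Vi R S F n S ([] @ g) [] 0 (0 + clen p)"
    using vi_G[OF Dg refl init ap] pl by simp
  then show "\<exists>\<alpha>. Vi R S F n S \<alpha> [] 0 n" using pl by auto
next
  assume "\<exists>\<alpha>. Vi R S F n S \<alpha> [] 0 n"
  then obtain \<alpha> where it: "Vi R S F n S \<alpha> [] 0 n" by blast
  from vi_sound[OF it] obtain p1 p2 \<delta> where r: "(S, \<alpha> @ []) \<in> R" and h: "admo F 0 (p1@p2)" "clen p1 = 0"
    "clen p1 + clen p2 = n" "Der R \<alpha> (map fst p2)" by blast
  have ap: "admo F 0 p2" using h(1,2) by simp
  have "derives R ([] @ S # []) ([] @ (\<alpha> @ []) @ [])" by (rule derives_step[OF r])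
  then have "derives R [S] (map fst p2)" using Der_derives[OF h(4)] derives_trans by simp
  moreover have tl: "map fst p2 \<in> lists TT" by (rule admo_wf[OF ap wf])
  ultimately have L: "terms_of p2 \<in> Lang NN TT R S" by (simp add: Lang_def terms_of_def)
  have "terms_of p2 \<in> Lp" using L unfolding Lang_def Lprefix_def by (intro CollectI conjI bexI[of _ "[]"]) auto
  then have pc: "p2 \<in> charset F" using ap by (simp add: charset_def)
  have "clen p2 = n" using h(2,3) by simp
  then show "\<exists>p. p \<in> charset F \<and> clen p = n \<and> terms_of p \<in> Lang NN TT R S" using L pc by blast
qed

theorem main: "D \<in> LangSigma NN TT R S Lex Sel \<longleftrightarrow> (\<exists>\<alpha>. Item S \<alpha> [] 0 (length D) \<in> II R S TT Lex Sel D)"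
proof -
  let ?n = "length D"
  have PP: "PP NN TT R S Lex Sel D = (\<Union>u. Ps ?n u)"
    by (simp add: PP_def Let_def Pinf_def Ps_def)
  have II: "II R S TT Lex Sel D = (\<Union>u. Js ?n u)"
    by (simp add: II_def Ik_def Js_def)
  have JV: "Js ?n u = Vs R S (Fam ?n u) ?n" for u
    using Js_u[OF _ Js_zero] by simp
  have fF: "(\<exists>p. p \<in> charset (Fam ?n u) \<and> clen p = ?n \<and> terms_of p \<in> Lang NN TT R S) \<longleftrightarrow>
      (\<exists>\<alpha>. Vi R S (Fam ?n u) ?n S \<alpha> [] 0 ?n)" for u
    by (rule final_F) (rule Fam_wf)
  have e2: "ll NN TT R S Lex Sel D = {p \<in> (\<Union>u. charset (Fam ?n u)). clen p = ?n \<and> terms_of p \<in> Lang NN TT R S}"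
    by (simp add: ll_def PP Ps_char clen_def)
  show ?thesis
  proof
    assume "D \<in> LangSigma NN TT R S Lex Sel"
    then have "ll NN TT R S Lex Sel D \<noteq> {}" by (simp add: LangSigma_def)
    then obtain p where "p \<in> ll NN TT R S Lex Sel D" by blast
    then obtain u where "p \<in> charset (Fam ?n u)" "clen p = ?n" "terms_of p \<in> Lang NN TT R S"
      unfolding e2 by blast
    then have "\<exists>\<alpha>. Vi R S (Fam ?n u) ?n S \<alpha> [] 0 ?n" using fF[of u] by blast
    then obtain \<alpha> where "Item S \<alpha> [] 0 ?n \<in> Js ?n u" unfolding JV by auto
    then show "\<exists>\<alpha>. Item S \<alpha> [] 0 ?n \<in> II R S TT Lex Sel D" unfolding II by blast
  next
    assume "\<exists>\<alpha>. Item S \<alpha> [] 0 ?n \<in> II R S TT Lex Sel D"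
    then obtain \<alpha> u where "Item S \<alpha> [] 0 ?n \<in> Js ?n u" unfolding II by blast
    then have "Vi R S (Fam ?n u) ?n S \<alpha> [] 0 ?n" unfolding JV by simp
    then obtain p where "p \<in> charset (Fam ?n u)" "clen p = ?n" "terms_of p \<in> Lang NN TT R S"
      using fF[of u] by blast
    then have "p \<in> ll NN TT R S Lex Sel D" unfolding e2 by blast
    then show "D \<in> LangSigma NN TT R S Lex Sel" by (auto simp: LangSigma_def)
  qed
qed

end



theorem theorem2:
  fixes NN TT :: "'a set" and R :: "('a \<times> 'a list) set" and S :: 'a
    and Lex :: "'a \<Rightarrow> 'c list \<Rightarrow> nat \<Rightarrow> ('a \<times> 'c list) set"
    and Sel :: "('a \<times> 'c list) set \<Rightarrow> ('a \<times> 'c list) set \<Rightarrow> ('a \<times> 'c list) set"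
    and D :: "'c list"
  assumes "is_cfg NN TT R S"
    and "is_local_lexing TT Lex Sel"
  shows "D \<in> LangSigma NN TT R S Lex Sel \<longleftrightarrow>
         (\<exists>\<alpha>. Item S \<alpha> [] 0 (length D) \<in> II R S TT Lex Sel D)"
proof -
  interpret LL NN TT R S Lex Sel D using assms by unfold_locales
  show ?thesis by (rule main)
qed

end
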